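(* Assume $\Phi^{y,\mathrm{app}},\Phi^{y,\mathrm{enh}}\in L^1_{\mu_\theta}$. Then $$\max\{d_{\mathrm{KL}}(\mu^{y,\mathrm{app}}_\theta\Vert\mu^{y,\mathrm{enh}}_\theta),d_{\mathrm{KL}}(\mu^{y,\mathrm{enh}}_\theta\Vert\mu^{y,\mathrm{app}}_\theta)\}\le C\Big(|\mathcal{O}m_E|_{\Sigma_\varepsilon^{-1}}+\Big\|\,|y-\mathcal{O}\mathcal{M}-\mathcal{O}m_E|^2_{\Sigma_\varepsilon^{-1}-(\Sigma_\varepsilon+\Gamma_E)^{-1}}\Big\|_{L^1_{\mu_\theta}}\Big)$$ with $C=\exp\big(2\|\Phi^{y,\mathrm{app}}\|_{L^1_{\mu_\theta}}+2\|\Phi^{y,\mathrm{enh}}\|_{L^1_{\mu_\theta}}\big)\max\Big\{\sqrt2\big(\|\Phi^{y,\mathrm{app}}\|^{1/2}_{L^1_{\mu_\theta}}+C_{\mathrm{enh}}\|\Phi^{y,\mathrm{enh}}\|^{1/2}_{L^1_{\mu_\theta}}\big),1\Big\}$.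
   Context: Let $\Theta$ be a Borel subset of a separable Banach space and $\mu_\theta$ a Borel probability measure on $\Theta$. Let $\mathcal{U}$ be a Banach space, $n\in\mathbb{N}$, $\mathcal{O}:\mathcal{U}\to\mathbb{R}^n$ continuous linear, $\mathcal{M}:\Theta\to\mathcal{U}$ measurable. Let $\Sigma_\varepsilon\in\mathbb{R}^{n\times n}$ be symmetric positive definite and $y\in\mathbb{R}^n$ fixed. For symmetric positive semidefinite $L$, $|a|_L:=(a^\top La)^{1/2}$, and for symmetric $A,B$ write $|a|^2_{A-B}:=a^\top Aa-a^\top Ba$. Fix $m_E\in\mathcal{U}$ and a covariance operator $\Sigma_E$ of a Gaussian measure on $\mathcal{U}$; $\Gamma_E:=\mathcal{O}\Sigma_E\mathcal{O}^*$. Misfits: $\Phi^{y,\mathrm{app}}(\theta')=\tfrac12|y-\mathcal{O}\mathcal{M}(\theta')|^2_{\Sigma_\varepsilon^{-1}}$, $\Phi^{y,\mathrm{enh}}(\theta')=\tfrac12|y-\mathcal{O}\mathcal{M}(\theta')-\mathcal{O}m_E|^2_{(\Sigma_\varepsilon+\Gamma_E)^{-1}}$. $C_{\mathrm{enh}}:=\|\Sigma_\varepsilon^{-1/2}(\Sigma_\varepsilon+\Gamma_E)^{1/2}\|_{\mathrm{op}}$. For a probability measure $\mu$ and measurable $\Phi\ge0$, $\mu_\Phi$ has density $\exp(-\Phi)/\int\exp(-\Phi)d\mu$ w.r.t. $\mu$. $\mu^{y,\mathrm{app}}_\theta:=(\mu_\theta)_{\Phi^{y,\mathrm{app}}}$,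 $\mu^{y,\mathrm{enh}}_\theta:=(\mu_\theta)_{\Phi^{y,\mathrm{enh}}}$. $d_{\mathrm{KL}}(\mu\Vert\nu)=\int\log\frac{d\mu}{d\nu}d\mu$ if $\mu\ll\nu$, $+\infty$ otherwise. *)

theory Defs
  imports "HOL-Probability.Probability"
begin

definition wnorm :: "real^'n^'n \<Rightarrow> real^'n \<Rightarrow> real" where
  "wnorm L a = sqrt (a \<bullet> (L *v a))"

definition wsq_diff :: "real^'n^'n \<Rightarrow> real^'n^'n \<Rightarrow> real^'n \<Rightarrow> real" where
  "wsq_diff A B a = a \<bullet> (A *v a) - a \<bullet> (B *v a)"

definition sym_mat :: "real^'n^'n \<Rightarrow> bool" where
  "sym_mat A \<longleftrightarrow> transpose A = A"

definition pos_def_mat :: "real^'n^'n \<Rightarrow> bool" where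
  "pos_def_mat A \<longleftrightarrow> sym_mat A \<and> (\<forall>x. x \<noteq> 0 \<longrightarrow> 0 < x \<bullet> (A *v x))"

definition psd_mat :: "real^'n^'n \<Rightarrow> bool" where
  "psd_mat A \<longleftrightarrow> sym_mat A \<and> (\<forall>x. 0 \<le> x \<bullet> (A *v x))"

definition psd_sqrt :: "real^'n^'n \<Rightarrow> real^'n^'n" where
  "psd_sqrt A = (THE S. psd_mat S \<and> S ** S = A)"

definition op_norm :: "real^'n^'m \<Rightarrow> real" where
  "op_norm A = onorm (\<lambda>x. A *v x)"

definition gaussian_measure :: "'u::real_normed_vector measure \<Rightarrow> bool" where
  "gaussian_measure G \<longleftrightarrow> prob_space G \<and> sets G = sets borel \<and>
     (\<forall>l::'u \<Rightarrow> real. bounded_linear l \<longrightarrow>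
        (\<exists>m s. 0 < s \<and> distributed G lborel l (\<lambda>x. ennreal (normal_density m s x)))
        \<or> (\<exists>c. AE u in G. l u = c))"

definition cov_form :: "'u measure \<Rightarrow> ('u \<Rightarrow> real) \<Rightarrow> ('u \<Rightarrow> real) \<Rightarrow> real" where
  "cov_form G l l' =
     (\<integral>u. (l u - (\<integral>v. l v \<partial>G)) * (l' u - (\<integral>v. l' v \<partial>G)) \<partial>G)"

text \<open>Gamma_E = O Sigma_E O^*, where Sigma_E is the covariance operator of G:
  its (i,j) entry is Sigma_E(e_i o O, e_j o O).\<close>
definition Gamma_mat :: "('u \<Rightarrow> real^'n) \<Rightarrow> 'u measure \<Rightarrow> real^'n^'n" where
  "Gamma_mat Obs G = (\<chi> i j. cov_form G (\<lambda>u. Obs u $ i) (\<lambda>u. Obs u $ j))"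

definition reweight :: "'a measure \<Rightarrow> ('a \<Rightarrow> real) \<Rightarrow> 'a measure" where
  "reweight \<mu> \<Phi> = density \<mu> (\<lambda>x. ennreal (exp (- \<Phi> x) / (\<integral>z. exp (- \<Phi> z) \<partial>\<mu>)))"

definition d_KL :: "'a measure \<Rightarrow> 'a measure \<Rightarrow> ereal" where
  "d_KL \<mu> \<nu> =
    (if sets \<mu> = sets \<nu> \<and> absolutely_continuous \<nu> \<mu> then
       (let f = (\<lambda>x. enn2real (RN_deriv \<nu> \<mu> x)) in
          enn2ereal (\<integral>\<^sup>+ x. ennreal (max 0 (ln (f x))) \<partial>\<mu>)
          - enn2ereal (\<integral>\<^sup>+ x. ennreal (max 0 (- ln (f x))) \<partial>\<mu>))
     else \<infinity>)"

end

theory Submission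
  imports Defs
begin


lemma sym_inner:
  assumes "sym_mat A" shows "x \<bullet> (A *v y) = (A *v x) \<bullet> y"
proof -
  have "x \<bullet> (A *v y) = (x v* A) \<bullet> y" by (simp add: dot_lmul_matrix)
  also have "x v* A = transpose A *v x" by simp
  also have "transpose A = A" using assms by (simp add: sym_mat_def)
  finally show ?thesis .
qed

lemma psd_nonneg: "psd_mat A \<Longrightarrow> 0 \<le> x \<bullet> (A *v x)"
  by (simp add: psd_mat_def)

lemma psd_CS:
  fixes A :: "real^'n^'n"
  assumes "psd_mat A"
  shows "(x \<bullet> (A *v y))\<^sup>2 \<le> (x \<bullet> (A *v x)) * (y \<bullet> (A *v y))"
proof -
  have sym: "sym_mat A" using assms by (simp add: psd_mat_def)
  define a where "a = x \<bullet> (A *v x)"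
  define b where "b = x \<bullet> (A *v y)"
  define c where "c = y \<bullet> (A *v y)"
  have q: "0 \<le> a + 2*t*b + t*t*c" for t
  proof -
    have "0 \<le> (x + t *\<^sub>R y) \<bullet> (A *v (x + t *\<^sub>R y))" using assms by (simp add: psd_mat_def)
    also have "\<dots> = a + t * (x \<bullet> (A *v y)) + t * (y \<bullet> (A *v x)) + t*t*c"
      by (simp add: a_def c_def algebra_simps inner_add_left inner_add_right matrix_vector_right_distrib matrix_vector_mult_scaleR)
    also have "y \<bullet> (A *v x) = b" using sym_inner[OF sym, of y x] by (simp add: b_def inner_commute)
    finally show ?thesis by (simp add: b_def algebra_simps)
  qed
  have a0: "0 \<le> a" using q[of 0] by simp
  have c0: "0 \<le> c" using assms by (simp add: psd_mat_def c_def)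
  show ?thesis
  proof (cases "c = 0")
    case True
    have "b = 0"
    proof (rule ccontr)
      assume "b \<noteq> 0"
      have "0 \<le> a + 2 * (-(a+1)/(2*b)) * b" using q[of "-(a+1)/(2*b)"] True by simp
      also have "\<dots> = -1" using \<open>b \<noteq> 0\<close> by (simp add: field_simps)
      finally show False by simp
    qed
    then show ?thesis by (simp add: b_def[symmetric] a_def[symmetric] c_def[symmetric] True)
  next
    case False
    with c0 have cp: "0 < c" by simp
    have "0 \<le> a + 2 * (-b/c) * b + (-b/c)*(-b/c)*c" by (rule q)
    also have "\<dots> = a - b^2/c" using cp by (simp add: field_simps power2_eq_square)
    finally have "b^2/c \<le> a" by simp
    then have "b^2 \<le> a * c" using cp by (simp add: divide_le_eq)
    then show ?thesis by (simp add: a_def b_def c_def)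
  qed
qed

lemma psd_zero_form:
  fixes A :: "real^'n^'n"
  assumes "psd_mat A" "x \<bullet> (A *v x) = 0"
  shows "A *v x = 0"
proof -
  have "(x \<bullet> (A *v (A *v x)))\<^sup>2 \<le> 0"
    using psd_CS[OF assms(1), of x "A *v x"] assms(2) by simp
  then have "x \<bullet> (A *v (A *v x)) = 0" by simp
  moreover have "x \<bullet> (A *v (A *v x)) = (A *v x) \<bullet> (A *v x)"
    using sym_inner[of A x "A *v x"] assms(1) by (simp add: psd_mat_def)
  ultimately show ?thesis by simp
qed



lemma matrix_add_rdistrib': "((A::real^'n^'m) + B) ** C = A ** C + B ** C"
  by (vector matrix_matrix_mult_def sum.distrib[symmetric] field_simps)

lemma matrix_diff_ldistrib': "(A::real^'n^'m) ** (B - C) = A ** B - A ** C"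
  by (vector matrix_matrix_mult_def sum_subtractf[symmetric] field_simps)

lemma matrix_diff_rdistrib': "((A::real^'n^'m) - B) ** C = A ** C - B ** C"
  by (vector matrix_matrix_mult_def sum_subtractf[symmetric] field_simps)

lemma transpose_add': "transpose ((A::real^'n^'m) + B) = transpose A + transpose B"
  by (simp add: transpose_def vec_eq_iff)

lemma transpose_diff': "transpose ((A::real^'n^'m) - B) = transpose A - transpose B"
  by (simp add: transpose_def vec_eq_iff)

lemma smv: "(c *\<^sub>R (M::real^'n^'m)) *v x = c *\<^sub>R (M *v x)"
  by (simp add: vec_eq_iff matrix_vector_mult_def sum_distrib_left mult.assoc)

fun mpow :: "real^'n^'n \<Rightarrow> nat \<Rightarrow> real^'n^'n" where
  "mpow B 0 = mat 1"
| "mpow B (Suc j) = B ** mpow B j"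

lemma mpow_add: "mpow B (i + j) = mpow B i ** mpow B j"
  by (induction i) (simp_all add: matrix_mul_assoc)

lemma mpow_1: "mpow B 1 = B" by simp

lemma mpow_comm: "B ** mpow B j = mpow B j ** B"
  using mpow_add[of B j 1] by simp

inductive_set cone :: "real^'n^'n \<Rightarrow> (real^'n^'n) set" for B where
  cpow: "mpow B j \<in> cone B"
| cadd: "M \<in> cone B \<Longrightarrow> N \<in> cone B \<Longrightarrow> M + N \<in> cone B"
| cscale: "M \<in> cone B \<Longrightarrow> 0 \<le> c \<Longrightarrow> c *\<^sub>R M \<in> cone B"

lemma cone_B: "B \<in> cone B" using cpow[of B 1] by simp
lemma cone_1: "mat 1 \<in> cone B" using cpow[of B 0] by simp
lemma cone_0: "0 \<in> cone B" using cscale[OF cone_1, of 0 B] by simp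

lemma cone_mult: assumes "M \<in> cone B" "N \<in> cone B" shows "M ** N \<in> cone B"
  using assms
proof (induction M rule: cone.induct)
  case (cpow j)
  from cpow.prems show ?case
  proof (induction N rule: cone.induct)
    case (cpow i) then show ?case using cone.cpow[of B "j+i"] by (simp add: mpow_add)
  next
    case (cadd M N) then show ?case by (simp add: matrix_add_ldistrib cone.cadd)
  next
    case (cscale M c) then show ?case by (simp add: matrix_scalar_ac scalar_matrix_assoc[symmetric] cone.cscale)
  qed
next
  case (cadd M1 M2) then show ?case by (simp add: matrix_add_rdistrib' cone.cadd)
next
  case (cscale M c) then show ?case by (simp add: scalar_matrix_assoc[symmetric] cone.cscale)
qed

lemma cone_comm: assumes "M \<in> cone B" "N \<in> cone B" shows "M ** N = N ** M"
  using assms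
proof (induction M rule: cone.induct)
  case (cpow j)
  from cpow.prems show ?case
  proof (induction N rule: cone.induct)
    case (cpow i) then show ?case by (metis add.commute mpow_add)
  next
    case (cadd M N) then show ?case by (simp add: matrix_add_ldistrib matrix_add_rdistrib')
  next
    case (cscale M c) then show ?case by (simp add: matrix_scalar_ac scalar_matrix_assoc[symmetric])
  qed
next
  case (cadd M1 M2) then show ?case by (simp add: matrix_add_ldistrib matrix_add_rdistrib')
next
  case (cscale M c) then show ?case by (simp add: matrix_scalar_ac scalar_matrix_assoc[symmetric])
qed

lemma mpow_sym: assumes "sym_mat B" shows "sym_mat (mpow B j)"
proof (induction j)
  case 0 then show ?case by (simp add: sym_mat_def)
next
  case (Suc j)
  have "transpose (B ** mpow B j) = transpose (mpow B j) ** transpose B"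
    by (simp add: matrix_transpose_mul)
  also have "\<dots> = mpow B j ** B" using Suc assms by (simp add: sym_mat_def)
  finally show ?case by (simp add: sym_mat_def mpow_comm)
qed

lemma cone_sym: assumes "sym_mat B" "M \<in> cone B" shows "sym_mat M"
  using assms(2)
proof (induction M rule: cone.induct)
  case (cpow j) then show ?case using mpow_sym[OF assms(1)] by blast
next
  case (cadd M N) then show ?case by (simp add: sym_mat_def transpose_add')
next
  case (cscale M c) then show ?case by (simp add: sym_mat_def transpose_scalar)
qed

lemma mpow_psd: assumes "psd_mat B" shows "0 \<le> x \<bullet> (mpow B j *v x)"
proof -
  have sB: "sym_mat B" using assms by (simp add: psd_mat_def)
  define m where "m = j div 2"
  have "j = m + m \<or> j = m + 1 + m" unfolding m_def by presburger
  then show ?thesis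
  proof
    assume "j = m + m"
    then have "x \<bullet> (mpow B j *v x) = x \<bullet> (mpow B m *v (mpow B m *v x))"
      by (simp add: mpow_add matrix_vector_mul_assoc)
    also have "\<dots> = (mpow B m *v x) \<bullet> (mpow B m *v x)"
      by (rule sym_inner[OF mpow_sym[OF sB]])
    finally show ?thesis by simp
  next
    assume "j = m + 1 + m"
    then have "mpow B j = (mpow B m ** mpow B 1) ** mpow B m" by (simp only: mpow_add)
    then have "x \<bullet> (mpow B j *v x) = x \<bullet> (mpow B m *v (B *v (mpow B m *v x)))"
      by (simp only: mpow_1 matrix_vector_mul_assoc matrix_mul_assoc)
    also have "\<dots> = (mpow B m *v x) \<bullet> (B *v (mpow B m *v x))"
      by (rule sym_inner[OF mpow_sym[OF sB]])
    finally show ?thesis using assms by (simp add: psd_mat_def)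
  qed
qed

lemma cone_psd: assumes "psd_mat B" "M \<in> cone B" shows "psd_mat M"
proof -
  have "sym_mat M" using cone_sym[OF _ assms(2)] assms(1) by (simp add: psd_mat_def)
  moreover have "0 \<le> x \<bullet> (M *v x)" for x
    using assms(2)
  proof (induction M rule: cone.induct)
    case (cpow j) then show ?case using mpow_psd[OF assms(1)] by blast
  next
    case (cadd M N) then show ?case by (simp add: matrix_vector_mult_add_rdistrib inner_add_right)
  next
    case (cscale M c) then show ?case by (simp add: smv)
  qed
  ultimately show ?thesis by (simp add: psd_mat_def)
qed



fun Wseq :: "real^'n^'n \<Rightarrow> nat \<Rightarrow> real^'n^'n" where
  "Wseq B 0 = 0"
| "Wseq B (Suc k) = (1/2) *\<^sub>R (B + Wseq B k ** Wseq B k)"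

lemma W_cone: "Wseq B k \<in> cone B"
  by (induction k) (auto intro!: cone_0 cscale cadd cone_B cone_mult)

lemma D_cone: "Wseq B (Suc k) - Wseq B k \<in> cone B"
proof (induction k)
  case 0 then show ?case by (auto intro!: cscale cone_B)
next
  case (Suc k)
  define W0 where "W0 = Wseq B k"
  define W1 where "W1 = Wseq B (Suc k)"
  have c0: "W0 \<in> cone B" "W1 \<in> cone B" unfolding W0_def W1_def by (rule W_cone)+
  have cD: "W1 - W0 \<in> cone B" using Suc unfolding W0_def W1_def .
  have com: "W1 ** W0 = W0 ** W1" by (rule cone_comm[OF c0(2) c0(1)])
  have "(W1 + W0) ** (W1 - W0) = W1 ** W1 - W0 ** W0"
    by (simp add: matrix_diff_ldistrib' matrix_add_rdistrib' com)
  moreover have "Wseq B (Suc (Suc k)) - Wseq B (Suc k) = (1/2) *\<^sub>R (W1 ** W1 - W0 ** W0)"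
    by (simp add: W0_def W1_def[symmetric] algebra_simps) (simp add: W1_def algebra_simps)
  ultimately have "Wseq B (Suc (Suc k)) - Wseq B (Suc k) = (1/2) *\<^sub>R ((W1 + W0) ** (W1 - W0))"
    by simp
  also have "\<dots> \<in> cone B" by (auto intro!: cscale cone_mult cadd c0 cD)
  finally show ?case .
qed

lemma W_bound:
  assumes nb: "\<And>x. norm (B *v x) \<le> norm x"
  shows "norm (Wseq B k *v x) \<le> norm x"
proof (induction k arbitrary: x)
  case 0 then show ?case by simp
next
  case (Suc k)
  have "Wseq B (Suc k) *v x = (1/2) *\<^sub>R (B *v x + Wseq B k *v (Wseq B k *v x))"
    by (simp add: smv matrix_vector_mult_add_rdistrib matrix_vector_mul_assoc)
  also have "norm \<dots> \<le> (1/2) * (norm (B *v x) + norm (Wseq B k *v (Wseq B k *v x)))"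
    by (simp add: norm_triangle_ineq)
  also have "\<dots> \<le> (1/2) * (norm x + norm x)"
    using nb[of x] Suc[of "Wseq B k *v x"] Suc[of x] by simp
  finally show ?case by simp
qed

lemma tendsto_mmult:
  fixes f g :: "'a \<Rightarrow> real^'n^'n"
  assumes "(f \<longlongrightarrow> A) F" "(g \<longlongrightarrow> C) F"
  shows "((\<lambda>k. f k ** g k) \<longlongrightarrow> A ** C) F"
  apply (rule vec_tendstoI)+
  apply (simp add: matrix_matrix_mult_def)
  apply (intro tendsto_sum tendsto_mult tendsto_vec_nth assms)
  done

lemma tendsto_mvmult:
  fixes f :: "'a \<Rightarrow> real^'n^'n"
  assumes "(f \<longlongrightarrow> A) F"
  shows "((\<lambda>k. f k *v x) \<longlongrightarrow> A *v x) F"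
  apply (rule vec_tendstoI)+
  apply (simp add: matrix_vector_mult_def)
  apply (intro tendsto_sum tendsto_mult tendsto_vec_nth assms tendsto_const)
  done

lemma tendsto_transpose:
  fixes f :: "'a \<Rightarrow> real^'n^'n"
  assumes "(f \<longlongrightarrow> A) F"
  shows "((\<lambda>k. transpose (f k)) \<longlongrightarrow> transpose A) F"
  apply (rule vec_tendstoI)+
  apply (simp add: transpose_def)
  apply (intro tendsto_vec_nth assms)
  done

lemma entry_inner: "(M::real^'n^'n) $ i $ j = axis i 1 \<bullet> (M *v axis j 1)"
  by (simp add: matrix_vector_mul_component inner_axis' inner_axis)

lemma polarization:
  assumes "sym_mat M"
  shows "u \<bullet> (M *v v) = ((u+v) \<bullet> (M *v (u+v)) - (u-v) \<bullet> (M *v (u-v))) / 4"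
proof -
  have "v \<bullet> (M *v u) = u \<bullet> (M *v v)"
    using sym_inner[OF assms, of v u] by (simp add: inner_commute)
  then show ?thesis
    by (simp add: matrix_vector_right_distrib matrix_vector_mult_diff_distrib
        inner_add_left inner_add_right inner_diff_left inner_diff_right algebra_simps)
qed

lemma W_limit:
  fixes B :: "real^'n^'n"
  assumes psd: "psd_mat B" and nb: "\<And>x. norm (B *v x) \<le> norm x"
  shows "\<exists>W. Wseq B \<longlonglongrightarrow> W"
proof -
  have conv: "convergent (\<lambda>k. x \<bullet> (Wseq B k *v x))" for x
  proof -
    have "incseq (\<lambda>k. x \<bullet> (Wseq B k *v x))"
    proof (rule incseq_SucI)
      fix k
      have "0 \<le> x \<bullet> ((Wseq B (Suc k) - Wseq B k) *v x)"
        using cone_psd[OF psd D_cone] by (simp add: psd_mat_def)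
      then show "x \<bullet> (Wseq B k *v x) \<le> x \<bullet> (Wseq B (Suc k) *v x)"
        by (simp add: matrix_vector_mult_diff_rdistrib inner_diff_right)
    qed
    moreover have "\<forall>k. x \<bullet> (Wseq B k *v x) \<le> norm x * norm x"
    proof
      fix k
      have "x \<bullet> (Wseq B k *v x) \<le> norm x * norm (Wseq B k *v x)"
        by (simp add: norm_cauchy_schwarz)
      also have "\<dots> \<le> norm x * norm x"
        by (intro mult_left_mono W_bound nb) simp
      finally show "x \<bullet> (Wseq B k *v x) \<le> norm x * norm x" .
    qed
    ultimately obtain L where "(\<lambda>k. x \<bullet> (Wseq B k *v x)) \<longlonglongrightarrow> L"
      using incseq_convergent by blast
    then show ?thesis by (auto simp: convergent_def)
  qed
  define QL where "QL (x::real^'n) = lim (\<lambda>k. x \<bullet> (Wseq B k *v x))" for x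
  have QLt: "(\<lambda>k. x \<bullet> (Wseq B k *v x)) \<longlonglongrightarrow> QL x" for x
    using conv[of x] unfolding QL_def by (simp add: convergent_LIMSEQ_iff)
  define W :: "real^'n^'n" where
    "W = (\<chi> i j. (QL (axis i 1 + axis j 1) - QL (axis i 1 - axis j 1)) / 4)"
  have "Wseq B \<longlonglongrightarrow> W"
  proof (rule vec_tendstoI)+
    fix i j
    have symk: "sym_mat (Wseq B k)" for k using cone_psd[OF psd W_cone] by (simp add: psd_mat_def)
    have "(\<lambda>k. Wseq B k $ i $ j) = (\<lambda>k. ((axis i 1 + axis j 1) \<bullet> (Wseq B k *v (axis i 1 + axis j 1))
        - (axis i 1 - axis j 1) \<bullet> (Wseq B k *v (axis i 1 - axis j 1))) / 4)"
      by (subst entry_inner, subst polarization[OF symk], rule refl)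
    moreover have "\<dots> \<longlonglongrightarrow> W $ i $ j"
      unfolding W_def by (simp, intro tendsto_intros QLt, simp)
    ultimately show "(\<lambda>k. Wseq B k $ i $ j) \<longlonglongrightarrow> W $ i $ j" by simp
  qed
  then show ?thesis by blast
qed

lemma sqrt_aux:
  assumes psd: "psd_mat B" and nb: "\<And>x. norm (B *v x) \<le> norm x"
  shows "\<exists>S. psd_mat S \<and> S ** S = mat 1 - B"
proof -
  obtain W where W: "Wseq B \<longlonglongrightarrow> W" using W_limit[OF psd nb] by blast
  have "(\<lambda>k. Wseq B (Suc k)) \<longlonglongrightarrow> W" using W by (rule LIMSEQ_Suc)
  moreover have "(\<lambda>k. Wseq B (Suc k)) \<longlonglongrightarrow> (1/2) *\<^sub>R (B + W ** W)"
    by (simp, intro tendsto_intros tendsto_mmult W)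
  ultimately have eq: "W = (1/2) *\<^sub>R (B + W ** W)" by (rule LIMSEQ_unique)
  have WW: "W ** W = 2 *\<^sub>R W - B"
  proof -
    have "2 *\<^sub>R W = B + W ** W" using arg_cong[OF eq, of "\<lambda>M. 2 *\<^sub>R M"] by simp
    then show ?thesis by (simp add: algebra_simps)
  qed
  have symW: "sym_mat W"
  proof -
    have "(\<lambda>k. transpose (Wseq B k)) \<longlonglongrightarrow> transpose W" by (rule tendsto_transpose[OF W])
    moreover have "(\<lambda>k. transpose (Wseq B k)) = Wseq B"
      using cone_psd[OF psd W_cone] by (simp add: psd_mat_def sym_mat_def)
    ultimately show ?thesis using W LIMSEQ_unique unfolding sym_mat_def by metis
  qed
  have qW: "x \<bullet> (W *v x) \<le> x \<bullet> x" for x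
  proof -
    have lim: "(\<lambda>k. x \<bullet> (Wseq B k *v x)) \<longlonglongrightarrow> x \<bullet> (W *v x)"
      by (intro tendsto_intros tendsto_mvmult W)
    have bd: "x \<bullet> (Wseq B k *v x) \<le> x \<bullet> x" for k
    proof -
      have "x \<bullet> (Wseq B k *v x) \<le> norm x * norm (Wseq B k *v x)"
        by (simp add: norm_cauchy_schwarz)
      also have "\<dots> \<le> norm x * norm x"
        by (intro mult_left_mono W_bound nb) simp
      finally show ?thesis by (simp add: inner_real_def dot_square_norm power2_eq_square)
    qed
    show ?thesis using LIMSEQ_le_const2[OF lim] bd by blast
  qed
  define S where "S = mat 1 - W"
  have "psd_mat S"
    using symW qW
    by (simp add: S_def psd_mat_def sym_mat_def transpose_diff' matrix_vector_mult_diff_rdistrib inner_diff_right)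
  moreover have "S ** S = mat 1 - B"
    by (simp add: S_def matrix_diff_ldistrib' matrix_diff_rdistrib' WW algebra_simps scaleR_2)
  ultimately show ?thesis by blast
qed



lemma psd_sqrt_exists:
  fixes A :: "real^'n^'n"
  assumes psd: "psd_mat A"
  shows "\<exists>S. psd_mat S \<and> S ** S = A"
proof -
  have symA: "sym_mat A" using psd by (simp add: psd_mat_def)
  define c where "c = onorm ((*v) A) + 1"
  have on: "0 \<le> onorm ((*v) A)" by (rule onorm_pos_le) simp
  then have c0: "0 < c" by (simp add: c_def)
  have qA: "x \<bullet> (A *v x) \<le> c * (x \<bullet> x)" for x
  proof -
    have "x \<bullet> (A *v x) \<le> norm x * norm (A *v x)" by (simp add: norm_cauchy_schwarz)
    also have "\<dots> \<le> norm x * (onorm ((*v) A) * norm x)"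
      by (intro mult_left_mono onorm) simp_all
    also have "\<dots> \<le> norm x * (c * norm x)"
      by (intro mult_left_mono) (simp_all add: c_def algebra_simps)
    finally show ?thesis by (simp add: dot_square_norm power2_eq_square algebra_simps)
  qed
  define B where "B = mat 1 - (1/c) *\<^sub>R A"
  have Bx: "B *v x = x - (1/c) *\<^sub>R (A *v x)" for x
    by (simp add: B_def matrix_vector_mult_diff_rdistrib smv)
  have symB: "sym_mat B" using symA by (simp add: B_def sym_mat_def transpose_diff' transpose_scalar)
  have qB0: "0 \<le> x \<bullet> (B *v x)" for x
  proof -
    have "(1/c) * (x \<bullet> (A *v x)) \<le> x \<bullet> x" using qA[of x] c0 by (simp add: field_simps)
    then show ?thesis by (simp add: Bx inner_diff_right)
  qed
  have qB1: "x \<bullet> (B *v x) \<le> x \<bullet> x" for x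
  proof -
    have "0 \<le> (1/c) * (x \<bullet> (A *v x))" using psd c0 by (simp add: psd_mat_def)
    then show ?thesis by (simp add: Bx inner_diff_right)
  qed
  have psdB: "psd_mat B" using symB qB0 by (simp add: psd_mat_def)
  have nb: "norm (B *v x) \<le> norm x" for x
  proof -
    define v where "v = B *v x"
    have "(x \<bullet> (B *v v))\<^sup>2 \<le> (x \<bullet> (B *v x)) * (v \<bullet> (B *v v))" by (rule psd_CS[OF psdB])
    moreover have "x \<bullet> (B *v v) = v \<bullet> v" using sym_inner[OF symB, of x v] by (simp add: v_def)
    ultimately have "(v \<bullet> v)\<^sup>2 \<le> (x \<bullet> (B *v x)) * (v \<bullet> (B *v v))" by simp
    also have "\<dots> \<le> (x \<bullet> x) * (v \<bullet> v)"
      by (intro mult_mono qB1 qB0) simp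
    finally have "(v \<bullet> v) * (v \<bullet> v) \<le> (x \<bullet> x) * (v \<bullet> v)" by (simp add: power2_eq_square)
    then have "v \<bullet> v \<le> x \<bullet> x"
      by (cases "v \<bullet> v = 0") (auto simp: mult_le_cancel_right)
    then show ?thesis by (simp add: v_def dot_square_norm) 
  qed
  obtain S0 where S0: "psd_mat S0" "S0 ** S0 = mat 1 - B" using sqrt_aux[OF psdB nb] by blast
  define S where "S = sqrt c *\<^sub>R S0"
  have "S ** S = (sqrt c * sqrt c) *\<^sub>R (S0 ** S0)"
    by (simp add: S_def matrix_scalar_ac scalar_matrix_assoc[symmetric])
  also have "\<dots> = A" using c0 S0(2) by (simp add: B_def)
  finally have "S ** S = A" .
  moreover have "psd_mat S" using S0(1) c0
    by (simp add: S_def psd_mat_def sym_mat_def transpose_scalar smv)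
  ultimately show ?thesis by blast
qed

definition tr :: "real^'n^'n \<Rightarrow> real" where "tr M = (\<Sum>i\<in>UNIV. M $ i $ i)"

lemma tr_comm: "tr (M ** N) = tr (N ** M)"
  unfolding tr_def matrix_matrix_mult_def
  by (simp, subst sum.swap, simp add: mult.commute)

lemma tr_add: "tr (M + N) = tr M + tr N"
  by (simp add: tr_def sum.distrib)

lemma psd_sqrt_unique:
  fixes S T :: "real^'n^'n"
  assumes S: "psd_mat S" and T: "psd_mat T" and eq: "S ** S = T ** T"
  shows "S = T"
proof -
  define D where "D = S - T"
  have symD: "sym_mat D" using S T by (simp add: D_def psd_mat_def sym_mat_def transpose_diff')
  have "S ** D + D ** T = 0"
    using eq by (simp add: D_def matrix_diff_ldistrib' matrix_diff_rdistrib')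
  then have "D ** (S ** D + D ** T) = 0" by simp
  then have "D ** S ** D + D ** D ** T = 0"
    by (simp add: matrix_add_ldistrib matrix_mul_assoc)
  then have "tr (D ** S ** D + D ** D ** T) = 0"
    by (simp add: tr_def)
  then have "tr (D ** S ** D) + tr (D ** D ** T) = 0"
    by (simp add: tr_add)
  moreover have "tr (D ** D ** T) = tr (D ** T ** D)"
  proof -
    have "tr ((D ** D) ** T) = tr (T ** (D ** D))" by (rule tr_comm)
    also have "\<dots> = tr ((T ** D) ** D)" by (simp add: matrix_mul_assoc)
    also have "\<dots> = tr (D ** (T ** D))" by (rule tr_comm)
    also have "\<dots> = tr ((D ** T) ** D)" by (simp add: matrix_mul_assoc)
    finally show ?thesis .
  qed
  ultimately have tsum: "tr (D ** S ** D) + tr (D ** T ** D) = 0" by simp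
  have diag: "(D ** P ** D) $ i $ i = (D *v axis i 1) \<bullet> (P *v (D *v axis i 1))" for P i
    by (subst entry_inner, simp add: matrix_vector_mul_assoc[symmetric] sym_inner[OF symD])
  have nn: "psd_mat P \<Longrightarrow> 0 \<le> (D ** P ** D) $ i $ i" for P i
    by (simp add: diag psd_mat_def)
  have "(\<forall>i\<in>UNIV. (D ** S ** D) $ i $ i = 0) \<and> (\<forall>i\<in>UNIV. (D ** T ** D) $ i $ i = 0)"
    using tsum unfolding tr_def
    by (subst (asm) add_nonneg_eq_0_iff) (auto simp: sum_nonneg_eq_0_iff nn S T sum_nonneg)
  then have z: "S *v (D *v axis i 1) = 0 \<and> T *v (D *v axis i 1) = 0" for i
    using psd_zero_form[OF S] psd_zero_form[OF T] by (simp add: diag)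
  have "D *v axis i 1 = 0" for i
  proof -
    have "D *v (D *v axis i 1) = 0"
      using z[of i] by (simp add: D_def matrix_vector_mult_diff_rdistrib)
    then have "(D *v axis i 1) \<bullet> (D *v axis i 1) = 0"
      using sym_inner[OF symD, of "axis i 1" "D *v axis i 1"] by simp
    then show ?thesis by simp
  qed
  then have "D = 0" by (simp add: vec_eq_iff entry_inner[of D] inner_axis')
  then show ?thesis by (simp add: D_def)
qed

lemma psd_sqrt_props:
  fixes A :: "real^'n^'n"
  assumes "psd_mat A"
  shows "psd_mat (psd_sqrt A) \<and> psd_sqrt A ** psd_sqrt A = A"
proof -
  have "\<exists>!S. psd_mat S \<and> S ** S = A"
  proof (rule ex_ex1I)
    show "\<exists>S. psd_mat S \<and> S ** S = A" by (rule psd_sqrt_exists[OF assms])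
  next
    fix S T assume "psd_mat S \<and> S ** S = A" "psd_mat T \<and> T ** T = A"
    then show "S = T" using psd_sqrt_unique by auto
  qed
  then show ?thesis unfolding psd_sqrt_def by (rule theI')
qed



lemmas bi_add = Bochner_Integration.integrable_add
lemmas bi_diff = Bochner_Integration.integrable_diff
lemmas bi_const = finite_measure.integrable_const

lemma bl_meas:
  fixes l :: "'u::real_normed_vector \<Rightarrow> 'v::real_normed_vector"
  assumes "bounded_linear l" "sets G = sets borel"
  shows "l \<in> borel_measurable G"
proof -
  have "l \<in> borel_measurable borel"
    by (intro borel_measurable_continuous_onI linear_continuous_on assms(1))
  then show ?thesis by (simp add: measurable_cong_sets[OF assms(2) refl])
qed

lemma gauss_sq_integrable:
  fixes l :: "'u::banach \<Rightarrow> real"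
  assumes G: "gaussian_measure G" and l: "bounded_linear l"
  shows "integrable G (\<lambda>u. (l u)\<^sup>2)" "integrable G l"
proof -
  have ps: "prob_space G" and sG: "sets G = sets borel" using G by (auto simp: gaussian_measure_def)
  interpret prob_space G by (rule ps)
  have lm: "l \<in> borel_measurable G" by (rule bl_meas[OF l sG])
  from G l have "(\<exists>m s. 0 < s \<and> distributed G lborel l (\<lambda>x. ennreal (normal_density m s x)))
        \<or> (\<exists>c. AE u in G. l u = c)" by (auto simp: gaussian_measure_def)
  then have "integrable G (\<lambda>u. (l u)\<^sup>2) \<and> integrable G l"
  proof
    assume "\<exists>m s. 0 < s \<and> distributed G lborel l (\<lambda>x. ennreal (normal_density m s x))"
    then obtain m s where s0: "0 < s" and d: "distributed G lborel l (\<lambda>x. ennreal (normal_density m s x))" by blast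
    have i0: "integrable lborel (\<lambda>x. normal_density m s x * (x - m)^k)" for k
      using integrable_normal_moment s0 by blast
    have "integrable lborel (\<lambda>x. normal_density m s x * (x - m)^2 + 2 * m * (normal_density m s x * (x - m)^1)
            + m^2 * (normal_density m s x * (x - m)^0))"
      by (intro bi_add integrable_mult_right i0)
    moreover have "(\<lambda>x. normal_density m s x * (x - m)^2 + 2 * m * (normal_density m s x * (x - m)^1)
            + m^2 * (normal_density m s x * (x - m)^0)) = (\<lambda>x. normal_density m s x * x\<^sup>2)"
      by (rule ext) (simp add: power2_eq_square algebra_simps)
    ultimately have "integrable lborel (\<lambda>x. normal_density m s x * x\<^sup>2)" by simp
    then have a: "integrable G (\<lambda>u. (l u)\<^sup>2)"
      using distributed_integrable[OF d, of "\<lambda>x. x\<^sup>2"] by simp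
    have "integrable lborel (\<lambda>x. normal_density m s x * (x - m)^1 + m * (normal_density m s x * (x - m)^0))"
      by (intro bi_add integrable_mult_right i0)
    moreover have "(\<lambda>x. normal_density m s x * (x - m)^1 + m * (normal_density m s x * (x - m)^0))
       = (\<lambda>x. normal_density m s x * x)"
      by (rule ext) (simp add: algebra_simps)
    ultimately have "integrable lborel (\<lambda>x. normal_density m s x * x)" by simp
    then have b: "integrable G l"
      using distributed_integrable[OF d, of "\<lambda>x. x"] by simp
    show ?thesis using a b by simp
  next
    assume "\<exists>c. AE u in G. l u = c"
    then obtain c where c: "AE u in G. l u = c" by blast
    have i1: "integrable G (\<lambda>u. c\<^sup>2)" "integrable G (\<lambda>u. c)" by simp_all
    have "integrable G (\<lambda>u. (l u)\<^sup>2) = integrable G (\<lambda>u. c\<^sup>2)"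
      by (rule integrable_cong_AE) (use lm c in auto)
    moreover have "integrable G l = integrable G (\<lambda>u. c)"
      by (rule integrable_cong_AE) (use lm c in auto)
    ultimately show ?thesis using i1 by simp
  qed
  then show "integrable G (\<lambda>u. (l u)\<^sup>2)" "integrable G l" by auto
qed

lemma gauss_centered_sq:
  fixes l :: "'u::banach \<Rightarrow> real"
  assumes G: "gaussian_measure G" and l: "bounded_linear l"
  shows "integrable G (\<lambda>u. (l u - c)\<^sup>2)"
proof -
  interpret prob_space G using G by (simp add: gaussian_measure_def)
  have "integrable G (\<lambda>u. (l u)\<^sup>2 - 2 * c * l u + c\<^sup>2)"
    using gauss_sq_integrable[OF G l]
    by (intro bi_add bi_diff integrable_mult_right bi_const) (auto intro: finite_measure_axioms)
  then show ?thesis by (simp add: power2_eq_square algebra_simps)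
qed

lemma quad_form_sum:
  "x \<bullet> ((M::real^'n^'n) *v x) = (\<Sum>i\<in>UNIV. \<Sum>j\<in>UNIV. x$i * (x$j * M$i$j))"
  unfolding inner_vec_def matrix_vector_mult_def
  by (simp add: sum_distrib_left algebra_simps)

lemma gamma_psd:
  fixes Obs :: "'u::banach \<Rightarrow> real^'n"
  assumes G: "gaussian_measure G" and O: "bounded_linear Obs"
  shows "psd_mat (Gamma_mat Obs G)"
proof -
  have ps: "prob_space G" using G by (simp add: gaussian_measure_def)
  define l where "l i u = Obs u $ i" for i u
  have bl: "bounded_linear (l i)" for i
    unfolding l_def by (rule bounded_linear_compose[OF bounded_linear_vec_nth O])
  define e where "e i = (\<integral>v. l i v \<partial>G)" for i
  define f where "f i u = l i u - e i" for i u
  have prod_int: "integrable G (\<lambda>u. f i u * f j u)" for i j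
  proof -
    have blp: "bounded_linear (\<lambda>u. l i u + l j u)" "bounded_linear (\<lambda>u. l i u - l j u)"
      using bl by (auto intro: bounded_linear_add bounded_linear_sub)
    have h1: "integrable G (\<lambda>u. ((\<lambda>u. l i u + l j u) u - (e i + e j))\<^sup>2)"
      by (rule gauss_centered_sq[OF G blp(1)])
    have h2: "integrable G (\<lambda>u. ((\<lambda>u. l i u - l j u) u - (e i - e j))\<^sup>2)"
      by (rule gauss_centered_sq[OF G blp(2)])
    have "integrable G (\<lambda>u. ((l i u + l j u - (e i + e j))\<^sup>2 - (l i u - l j u - (e i - e j))\<^sup>2) / 4)"
      using h1 h2 by (intro Bochner_Integration.integrable_divide bi_diff) auto
    moreover have "(\<lambda>u. f i u * f j u) = (\<lambda>u. ((l i u + l j u - (e i + e j))\<^sup>2 - (l i u - l j u - (e i - e j))\<^sup>2) / 4)"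
      by (rule ext) (simp add: f_def power2_eq_square algebra_simps)
    ultimately show ?thesis by simp
  qed
  have Gm: "Gamma_mat Obs G $ i $ j = (\<integral>u. f i u * f j u \<partial>G)" for i j
    by (simp add: Gamma_mat_def cov_form_def f_def e_def l_def)
  have "sym_mat (Gamma_mat Obs G)"
    by (simp add: sym_mat_def transpose_def vec_eq_iff Gm mult.commute)
  moreover have "0 \<le> x \<bullet> (Gamma_mat Obs G *v x)" for x
  proof -
    have "x \<bullet> (Gamma_mat Obs G *v x) = (\<Sum>i\<in>UNIV. \<Sum>j\<in>UNIV. x $ i * (x $ j * (\<integral>u. f i u * f j u \<partial>G)))"
      by (simp only: quad_form_sum Gm)
    also have "\<dots> = (\<integral>u. (\<Sum>i\<in>UNIV. \<Sum>j\<in>UNIV. x $ i * (x $ j * (f i u * f j u))) \<partial>G)"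
      using prod_int by (simp add: Bochner_Integration.integral_sum Bochner_Integration.integrable_sum)
    also have "\<dots> = (\<integral>u. (\<Sum>i\<in>UNIV. x $ i * f i u)\<^sup>2 \<partial>G)"
      by (rule Bochner_Integration.integral_cong[OF refl]) (simp add: power2_eq_square sum_product algebra_simps)
    also have "\<dots> \<ge> 0" by simp
    finally show ?thesis .
  qed
  ultimately show ?thesis by (simp add: psd_mat_def)
qed



lemma pd_psd: "pos_def_mat A \<Longrightarrow> psd_mat (A::real^'n^'n)"
  unfolding pos_def_mat_def psd_mat_def
  by (metis inner_zero_left order_less_imp_le order_refl)

lemma pd_invertible:
  fixes A :: "real^'n^'n"
  assumes "pos_def_mat A" shows "invertible A"
proof -
  have "\<forall>x. A *v x = 0 \<longrightarrow> x = 0"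
    using assms unfolding pos_def_mat_def by (metis inner_zero_right less_irrefl)
  then have "\<exists>B. B ** A = mat 1" by (simp add: matrix_left_invertible_ker)
  then show ?thesis by (simp add: invertible_left_inverse)
qed

lemma inv_props:
  fixes A :: "real^'n^'n"
  assumes "invertible A"
  shows "A ** matrix_inv A = mat 1" "matrix_inv A ** A = mat 1"
proof -
  have "\<exists>A'. A ** A' = mat 1 \<and> A' ** A = mat 1" using assms by (simp add: invertible_def)
  then have "A ** matrix_inv A = mat 1 \<and> matrix_inv A ** A = mat 1"
    unfolding matrix_inv_def by (rule someI_ex)
  then show "A ** matrix_inv A = mat 1" "matrix_inv A ** A = mat 1" by auto
qed

lemma pd_inv:
  fixes A :: "real^'n^'n"
  assumes pd: "pos_def_mat A"
  shows "pos_def_mat (matrix_inv A)"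
proof -
  define Ai where "Ai = matrix_inv A"
  have i1: "A ** Ai = mat 1" and i2: "Ai ** A = mat 1"
    using inv_props[OF pd_invertible[OF pd]] by (auto simp: Ai_def)
  have sA: "transpose A = A" using pd by (simp add: pos_def_mat_def sym_mat_def)
  have "transpose Ai ** A = mat 1"
    using arg_cong[OF i1, of transpose] by (simp add: matrix_transpose_mul sA)
  then have "transpose Ai = Ai"
    by (metis i1 matrix_mul_assoc matrix_mul_lid matrix_mul_rid)
  then have sym: "sym_mat Ai" by (simp add: sym_mat_def)
  have "0 < x \<bullet> (Ai *v x)" if "x \<noteq> 0" for x
  proof -
    define y where "y = Ai *v x"
    have xy: "A *v y = x" by (simp add: y_def matrix_vector_mul_assoc i1)
    then have "y \<noteq> 0" using that by auto
    then have "0 < y \<bullet> (A *v y)" using pd by (simp add: pos_def_mat_def)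
    also have "y \<bullet> (A *v y) = y \<bullet> x" by (simp only: xy)
    also have "\<dots> = x \<bullet> (Ai *v x)" by (simp add: y_def inner_commute)
    finally show ?thesis .
  qed
  then show ?thesis using sym by (simp add: pos_def_mat_def Ai_def)
qed

lemma pd_add_psd:
  fixes A B :: "real^'n^'n"
  assumes "pos_def_mat A" "psd_mat B"
  shows "pos_def_mat (A + B)"
  using assms
  by (fastforce simp: pos_def_mat_def psd_mat_def sym_mat_def transpose_add'
       matrix_vector_mult_add_rdistrib inner_add_right add_pos_nonneg)

lemma wnorm_eq:
  fixes L :: "real^'n^'n"
  assumes "psd_mat L"
  shows "wnorm L a = norm (psd_sqrt L *v a)" "(wnorm L a)\<^sup>2 = a \<bullet> (L *v a)"
proof -
  obtain P where P: "P = psd_sqrt L" by blast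
  have Pp: "psd_mat P" "P ** P = L" using psd_sqrt_props[OF assms] P by auto
  have "a \<bullet> (L *v a) = (P *v a) \<bullet> (P *v a)"
    using sym_inner[of P a "P *v a"] Pp by (simp add: psd_mat_def matrix_vector_mul_assoc)
  then show "wnorm L a = norm (psd_sqrt L *v a)"
    by (simp add: wnorm_def P[symmetric] norm_eq_sqrt_inner)
  show "(wnorm L a)\<^sup>2 = a \<bullet> (L *v a)"
    using assms by (simp add: wnorm_def psd_mat_def)
qed

lemma wnorm_nonneg: "psd_mat L \<Longrightarrow> 0 \<le> wnorm L a"
  by (simp add: wnorm_eq)

lemma Cenh_bound:
  fixes K :: "real^'n^'n"
  assumes pdK: "pos_def_mat K" and psdA: "psd_mat A"
  shows "norm (psd_sqrt A *v v) \<le> op_norm (psd_sqrt A ** psd_sqrt K) * wnorm (matrix_inv K) v"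
proof -
  define P where "P = psd_sqrt A"
  define Q where "Q = psd_sqrt K"
  define Bm where "Bm = matrix_inv K"
  have Qp: "psd_mat Q" "Q ** Q = K" using psd_sqrt_props[OF pd_psd[OF pdK]] by (auto simp: Q_def)
  have KB: "K ** Bm = mat 1" using inv_props[OF pd_invertible[OF pdK]] by (simp add: Bm_def)
  have pdB: "pos_def_mat Bm" using pd_inv[OF pdK] by (simp add: Bm_def)
  define w where "w = Q *v (Bm *v v)"
  have Qw: "Q *v w = v" by (simp add: w_def matrix_vector_mul_assoc matrix_mul_assoc Qp(2) KB)
  have "P *v v = (P ** Q) *v w" by (simp add: Qw[symmetric] matrix_vector_mul_assoc)
  then have "norm (P *v v) \<le> onorm ((*v) (P ** Q)) * norm w"
    by (simp add: onorm)
  moreover have "norm w = wnorm Bm v"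
  proof -
    have "w \<bullet> w = (Bm *v v) \<bullet> (Q *v w)"
      using sym_inner[of Q "Bm *v v" "Q *v (Bm *v v)"] Qp(1) by (simp add: psd_mat_def w_def inner_commute)
    also have "\<dots> = v \<bullet> (Bm *v v)" by (simp add: Qw inner_commute)
    finally show ?thesis by (simp add: wnorm_def norm_eq_sqrt_inner)
  qed
  ultimately show ?thesis by (simp add: op_norm_def P_def Q_def Bm_def)
qed

lemma real_pt_bound:
  fixes p q n b ce w :: real
  assumes "0 \<le> p" "0 \<le> q" "0 \<le> n" "0 \<le> b" "\<bar>p - q\<bar> \<le> n" "q \<le> ce * b"
  shows "\<bar>p\<^sup>2/2 - b\<^sup>2/2\<bar> \<le> n * (p + ce * b) / 2 + \<bar>q\<^sup>2 - b\<^sup>2\<bar> / 2"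
proof -
  have "p\<^sup>2 - q\<^sup>2 = (p - q) * (p + q)" by (simp add: power2_eq_square algebra_simps)
  then have "\<bar>p\<^sup>2 - q\<^sup>2\<bar> = \<bar>p - q\<bar> * (p + q)"
    using assms by (simp add: abs_mult)
  also have "\<dots> \<le> n * (p + ce * b)"
    using assms by (intro mult_mono) auto
  finally have "\<bar>p\<^sup>2 - q\<^sup>2\<bar> \<le> n * (p + ce * b)" .
  moreover have "\<bar>p\<^sup>2 - b\<^sup>2\<bar> \<le> \<bar>p\<^sup>2 - q\<^sup>2\<bar> + \<bar>q\<^sup>2 - b\<^sup>2\<bar>" by simp
  moreover have "\<bar>p\<^sup>2/2 - b\<^sup>2/2\<bar> = \<bar>p\<^sup>2 - b\<^sup>2\<bar> / 2" by (simp add: abs_if field_simps)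
  ultimately have h: "\<bar>p\<^sup>2 - b\<^sup>2\<bar> \<le> n * (p + ce * b) + \<bar>q\<^sup>2 - b\<^sup>2\<bar>"
    and eq: "\<bar>p\<^sup>2/2 - b\<^sup>2/2\<bar> = \<bar>p\<^sup>2 - b\<^sup>2\<bar> / 2" by linarith+
  show ?thesis unfolding eq add_divide_distrib[symmetric] by (intro divide_right_mono h) simp
qed



lemma exp_lip:
  fixes u v :: real
  assumes "0 \<le> u" "0 \<le> v"
  shows "\<bar>exp (- u) - exp (- v)\<bar> \<le> \<bar>u - v\<bar>"
proof -
  have key: "exp (- a) - exp (- b) \<le> b - a" if "0 \<le> a" "a \<le> b" for a b :: real
  proof -
    have "exp (- a) - exp (- b) = exp (- a) * (1 - exp (a - b))"
      by (simp add: algebra_simps exp_add[symmetric])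
    also have "\<dots> \<le> 1 - exp (a - b)"
      using mult_right_mono[of "exp (- a)" 1 "1 - exp (a - b)"] that by simp
    also have "\<dots> \<le> b - a"
    proof -
      have h: "1 + (a - b) \<le> exp (a - b)" by (rule exp_ge_add_one_self)
      show ?thesis using h by linarith
    qed
    finally show ?thesis .
  qed
  show ?thesis
  proof (cases "u \<le> v")
    case True
    then have "exp (- v) \<le> exp (- u)" by simp
    then show ?thesis using key[of u v] True assms by simp
  next
    case False
    then have "exp (- u) \<le> exp (- v)" by simp
    then show ?thesis using key[of v u] False assms by simp
  qed
qed

lemma ln_diff_bound:
  fixes z1 z2 :: real
  assumes "0 < z1" "0 < z2"
  shows "\<bar>ln z2 - ln z1\<bar> \<le> \<bar>z2 - z1\<bar> / min z1 z2"
proof (cases "z1 \<le> z2")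
  case True
  have "ln z2 - ln z1 = ln (z2 / z1)" using assms by (simp add: ln_div)
  also have "\<dots> \<le> z2 / z1 - 1" using assms by (intro ln_le_minus_one) simp
  also have "\<dots> = (z2 - z1) / z1" using assms by (simp add: field_simps)
  finally have "ln z2 - ln z1 \<le> (z2 - z1) / z1" .
  moreover have "0 \<le> ln z2 - ln z1" using True assms by simp
  ultimately show ?thesis using True by (simp add: min_def)
next
  case False
  have "ln z1 - ln z2 = ln (z1 / z2)" using assms by (simp add: ln_div)
  also have "\<dots> \<le> z1 / z2 - 1" using assms by (intro ln_le_minus_one) simp
  also have "\<dots> = (z1 - z2) / z2" using assms by (simp add: field_simps)
  finally have "ln z1 - ln z2 \<le> (z1 - z2) / z2" .
  moreover have "0 \<le> ln z1 - ln z2" using False assms by simp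
  ultimately show ?thesis using False by (simp add: min_def abs_minus_commute)
qed

lemma Z_props:
  fixes \<Phi> :: "'a \<Rightarrow> real"
  assumes P: "prob_space \<mu>" and m: "\<Phi> \<in> borel_measurable \<mu>" and n: "\<And>x. 0 \<le> \<Phi> x"
    and i: "integrable \<mu> \<Phi>"
  shows "integrable \<mu> (\<lambda>x. exp (- \<Phi> x))"
    "exp (- (\<integral>x. \<Phi> x \<partial>\<mu>)) \<le> (\<integral>x. exp (- \<Phi> x) \<partial>\<mu>)"
    "(\<integral>x. exp (- \<Phi> x) \<partial>\<mu>) \<le> 1"
proof -
  interpret prob_space \<mu> by (rule P)
  have mm: "(\<lambda>x. exp (- \<Phi> x)) \<in> borel_measurable \<mu>" using m by measurable
  show ie: "integrable \<mu> (\<lambda>x. exp (- \<Phi> x))"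
    by (rule Bochner_Integration.integrable_bound[of _ "\<lambda>x. 1::real"]) (use mm n in auto)
  define a where "a = (\<integral>x. \<Phi> x \<partial>\<mu>)"
  have pt: "exp (- a) * (1 + (a - \<Phi> x)) \<le> exp (- \<Phi> x)" for x
  proof -
    have "exp (- a) * (1 + (a - \<Phi> x)) \<le> exp (- a) * exp (a - \<Phi> x)"
      by (intro mult_left_mono exp_ge_add_one_self) simp
    also have "\<dots> = exp (- \<Phi> x)" by (simp add: exp_add[symmetric])
    finally show ?thesis .
  qed
  have "(\<integral>x. exp (- a) * (1 + (a - \<Phi> x)) \<partial>\<mu>) \<le> (\<integral>x. exp (- \<Phi> x) \<partial>\<mu>)"
    by (intro integral_mono ie pt integrable_mult_right Bochner_Integration.integrable_add
        Bochner_Integration.integrable_diff i) auto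
  moreover have "(\<integral>x. exp (- a) * (1 + (a - \<Phi> x)) \<partial>\<mu>) = exp (- a)"
    using i by (simp add: Bochner_Integration.integral_add Bochner_Integration.integral_diff a_def prob_space.prob_space[OF P])
  ultimately show "exp (- (\<integral>x. \<Phi> x \<partial>\<mu>)) \<le> (\<integral>x. exp (- \<Phi> x) \<partial>\<mu>)" by (simp add: a_def)
  show "(\<integral>x. exp (- \<Phi> x) \<partial>\<mu>) \<le> 1"
    by (rule integral_le_const) (use ie n in auto)
qed

lemma sqrt_int:
  fixes f :: "'a \<Rightarrow> real"
  assumes P: "prob_space \<mu>" and m: "f \<in> borel_measurable \<mu>" and n: "\<And>x. 0 \<le> f x"
    and i: "integrable \<mu> f"
  shows "integrable \<mu> (\<lambda>x. sqrt (f x))" "(\<integral>x. sqrt (f x) \<partial>\<mu>) \<le> sqrt (\<integral>x. f x \<partial>\<mu>)"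
proof -
  interpret prob_space \<mu> by (rule P)
  have sm: "(\<lambda>x. sqrt (f x)) \<in> borel_measurable \<mu>" using m by measurable
  have b: "sqrt (f x) \<le> 1 + f x" for x
  proof (cases "f x \<le> 1")
    case True then have "sqrt (f x) \<le> 1" by simp
    then show ?thesis using n[of x] by linarith
  next
    case False
    then have "f x * 1 \<le> f x * f x" using n[of x] by (intro mult_left_mono) auto
    then have "sqrt (f x) \<le> f x" using n[of x] by (simp add: real_sqrt_le_iff' power2_eq_square)
    then show ?thesis by simp
  qed
  show si: "integrable \<mu> (\<lambda>x. sqrt (f x))"
    by (rule Bochner_Integration.integrable_bound[of _ "\<lambda>x. 1 + f x"])
       (use sm b n i in \<open>auto intro!: Bochner_Integration.integrable_add\<close>)
  define t where "t = sqrt (\<integral>x. f x \<partial>\<mu>)"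
  have I0: "0 \<le> (\<integral>x. f x \<partial>\<mu>)" using n by simp
  show "(\<integral>x. sqrt (f x) \<partial>\<mu>) \<le> sqrt (\<integral>x. f x \<partial>\<mu>)"
  proof (cases "t = 0")
    case True
    then have "(\<integral>x. f x \<partial>\<mu>) = 0" using I0 by (simp add: t_def)
    then have "AE x in \<mu>. f x = 0" using integral_nonneg_eq_0_iff_AE[OF i] n by simp
    then have "AE x in \<mu>. sqrt (f x) = 0" by auto
    then have "(\<integral>x. sqrt (f x) \<partial>\<mu>) = (\<integral>x. 0 \<partial>\<mu>)" by (intro integral_cong_AE sm) auto
    then show ?thesis using I0 by simp
  next
    case False
    then have tp: "0 < t" using I0 by (simp add: t_def)
    have pt: "sqrt (f x) \<le> (f x + t\<^sup>2) / (2 * t)" for x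
    proof -
      have "0 \<le> (sqrt (f x) - t)\<^sup>2" by simp
      then have "2 * t * sqrt (f x) \<le> f x + t\<^sup>2"
        using n[of x] by (simp add: power2_eq_square algebra_simps)
      then show ?thesis using tp by (simp add: field_simps)
    qed
    have "(\<integral>x. sqrt (f x) \<partial>\<mu>) \<le> (\<integral>x. (f x + t\<^sup>2) / (2 * t) \<partial>\<mu>)"
      by (intro integral_mono si pt Bochner_Integration.integrable_divide
          Bochner_Integration.integrable_add i) auto
    also have "\<dots> = ((\<integral>x. f x \<partial>\<mu>) + t\<^sup>2) / (2 * t)"
      using i by (simp add: Bochner_Integration.integral_add prob_space.prob_space[OF P])
    also have "\<dots> = t" using tp I0 by (simp add: t_def field_simps power2_eq_square)
    finally show ?thesis by (simp add: t_def)
  qed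
qed



lemma null_sets_density_pos:
  assumes f: "f \<in> borel_measurable M" and pos: "\<And>x. 0 < f x"
  shows "null_sets (density M f) = null_sets M"
proof (intro set_eqI iffI)
  fix A assume "A \<in> null_sets (density M f)"
  then have A: "A \<in> sets M" "AE x in M. x \<in> A \<longrightarrow> f x = 0"
    using null_sets_density_iff[OF f] by auto
  then have "AE x in M. x \<notin> A" using pos by (auto elim!: eventually_mono simp: less_le)
  then show "A \<in> null_sets M" using AE_iff_null_sets[OF A(1)] by simp
next
  fix A assume A: "A \<in> null_sets M"
  then have "AE x in M. x \<notin> A" using AE_iff_null_sets[of A M] by auto
  then have "AE x in M. x \<in> A \<longrightarrow> f x = 0" by (auto elim!: eventually_mono)
  then show "A \<in> null_sets (density M f)" using null_sets_density_iff[OF f] A by auto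
qed

lemma ereal_sub_le:
  assumes "X \<le> ennreal r" "0 \<le> r"
  shows "enn2ereal X - enn2ereal Y \<le> ereal r"
proof -
  have "enn2ereal X \<le> ereal r" using assms
    by (metis enn2ereal_ennreal less_eq_ennreal.rep_eq)
  moreover have "0 \<le> enn2ereal X" "0 \<le> enn2ereal Y" by simp_all
  ultimately show ?thesis
    by (cases "enn2ereal X"; cases "enn2ereal Y") auto
qed

lemma KL_bound:
  fixes \<Phi>1 \<Phi>2 :: "'a \<Rightarrow> real"
  assumes P: "prob_space \<mu>"
    and m1[measurable]: "\<Phi>1 \<in> borel_measurable \<mu>" and m2[measurable]: "\<Phi>2 \<in> borel_measurable \<mu>"
    and n1: "\<And>x. 0 \<le> \<Phi>1 x" and n2: "\<And>x. 0 \<le> \<Phi>2 x"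
    and i1: "integrable \<mu> \<Phi>1" and i2: "integrable \<mu> \<Phi>2"
  shows "d_KL (reweight \<mu> \<Phi>1) (reweight \<mu> \<Phi>2)
     \<le> ereal (2 * exp (2 * ((\<integral>x. \<Phi>1 x \<partial>\<mu>) + (\<integral>x. \<Phi>2 x \<partial>\<mu>))) * (\<integral>x. \<bar>\<Phi>1 x - \<Phi>2 x\<bar> \<partial>\<mu>))"
proof -
  interpret prob_space \<mu> by (rule P)
  define a1 where "a1 = (\<integral>x. \<Phi>1 x \<partial>\<mu>)"
  define a2 where "a2 = (\<integral>x. \<Phi>2 x \<partial>\<mu>)"
  define s where "s = a1 + a2"
  define Z1 where "Z1 = (\<integral>x. exp (- \<Phi>1 x) \<partial>\<mu>)"
  define Z2 where "Z2 = (\<integral>x. exp (- \<Phi>2 x) \<partial>\<mu>)"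
  define D where "D = (\<integral>x. \<bar>\<Phi>1 x - \<Phi>2 x\<bar> \<partial>\<mu>)"
  define L where "L = \<bar>ln Z2 - ln Z1\<bar>"
  have a10: "0 \<le> a1" "0 \<le> a2" using n1 n2 by (simp_all add: a1_def a2_def)
  note Z1p = Z_props[OF P m1 n1 i1, folded Z1_def a1_def]
  note Z2p = Z_props[OF P m2 n2 i2, folded Z2_def a2_def]
  have Z1pos: "0 < Z1" using Z1p(2) by (rule less_le_trans[OF exp_gt_zero])
  have Z2pos: "0 < Z2" using Z2p(2) by (rule less_le_trans[OF exp_gt_zero])
  have Zs1: "1 / Z1 \<le> exp s"
  proof -
    have "exp (- s) \<le> Z1" using Z1p(2) a10 by (smt (verit) exp_le_cancel_iff s_def)
    then show ?thesis using Z1pos by (simp add: field_simps exp_minus)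
  qed
  have Zmin: "1 / min Z1 Z2 \<le> exp s"
  proof -
    have "exp (- s) \<le> Z1" "exp (- s) \<le> Z2" using Z1p(2) Z2p(2) a10
      by (smt (verit) exp_le_cancel_iff s_def)+
    then have "exp (- s) \<le> min Z1 Z2" by simp
    moreover have "0 < min Z1 Z2" using Z1pos Z2pos by simp
    moreover have "\<And>m. exp (- s) \<le> m \<Longrightarrow> 0 < m \<Longrightarrow> 1 / m \<le> exp s"
      by (simp add: field_simps exp_minus)
    ultimately show ?thesis by blast
  qed
  have iD: "integrable \<mu> (\<lambda>x. \<bar>\<Phi>1 x - \<Phi>2 x\<bar>)"
    using i1 i2 by (intro integrable_abs Bochner_Integration.integrable_diff)
  have D0: "0 \<le> D" by (simp add: D_def)
  have ZD: "\<bar>Z2 - Z1\<bar> \<le> D"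
  proof -
    have "Z2 - Z1 = (\<integral>x. exp (- \<Phi>2 x) - exp (- \<Phi>1 x) \<partial>\<mu>)"
      using Z1p(1) Z2p(1) by (simp add: Z1_def Z2_def Bochner_Integration.integral_diff)
    then have "\<bar>Z2 - Z1\<bar> \<le> (\<integral>x. \<bar>exp (- \<Phi>2 x) - exp (- \<Phi>1 x)\<bar> \<partial>\<mu>)"
      using integral_abs_bound by simp
    also have "\<dots> \<le> D" unfolding D_def
      using Z1p(1) Z2p(1) iD i1 i2 exp_lip[OF n2 n1]
      by (intro integral_mono integrable_abs Bochner_Integration.integrable_diff)
         (auto simp: abs_minus_commute)
    finally show ?thesis .
  qed
  have LD: "L \<le> D * exp s"
  proof -
    have "L \<le> \<bar>Z2 - Z1\<bar> / min Z1 Z2" unfolding L_def by (rule ln_diff_bound[OF Z1pos Z2pos])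
    also have "\<dots> = \<bar>Z2 - Z1\<bar> * (1 / min Z1 Z2)" by simp
    also have "\<dots> \<le> D * exp s" using ZD Zmin Z1pos Z2pos by (intro mult_mono) auto
    finally show ?thesis .
  qed
  have L0: "0 \<le> L" by (simp add: L_def)
  define f1 where "f1 x = exp (- \<Phi>1 x) / Z1" for x
  define f2 where "f2 x = exp (- \<Phi>2 x) / Z2" for x
  have f1pos: "0 < f1 x" for x using Z1pos by (simp add: f1_def)
  have f2pos: "0 < f2 x" for x using Z2pos by (simp add: f2_def)
  have [measurable]: "f1 \<in> borel_measurable \<mu>" "f2 \<in> borel_measurable \<mu>"
    unfolding f1_def f2_def by measurable
  define \<nu>1 where "\<nu>1 = density \<mu> (\<lambda>x. ennreal (f1 x))"
  define \<nu>2 where "\<nu>2 = density \<mu> (\<lambda>x. ennreal (f2 x))"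
  have rw1: "reweight \<mu> \<Phi>1 = \<nu>1" by (simp add: reweight_def \<nu>1_def f1_def Z1_def)
  have rw2: "reweight \<mu> \<Phi>2 = \<nu>2" by (simp add: reweight_def \<nu>2_def f2_def Z2_def)
  have sets_eq: "sets \<nu>1 = sets \<nu>2" by (simp add: \<nu>1_def \<nu>2_def)
  have ns1: "null_sets \<nu>1 = null_sets \<mu>" unfolding \<nu>1_def
    by (rule null_sets_density_pos) (auto simp: f1pos)
  have ns2: "null_sets \<nu>2 = null_sets \<mu>" unfolding \<nu>2_def
    by (rule null_sets_density_pos) (auto simp: f2pos)
  have ac: "absolutely_continuous \<nu>2 \<nu>1" by (simp add: absolutely_continuous_def ns1 ns2)
  define g where "g x = exp (\<Phi>2 x - \<Phi>1 x) * Z2 / Z1" for x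
  have gpos: "0 < g x" for x using Z1pos Z2pos by (simp add: g_def)
  have [measurable]: "g \<in> borel_measurable \<mu>" unfolding g_def by measurable
  have dens: "density \<nu>2 (\<lambda>x. ennreal (g x)) = \<nu>1"
  proof -
    have "density \<nu>2 (\<lambda>x. ennreal (g x)) = density \<mu> (\<lambda>x. ennreal (f2 x) * ennreal (g x))"
      unfolding \<nu>2_def by (rule density_density_eq) auto
    also have "(\<lambda>x. ennreal (f2 x) * ennreal (g x)) = (\<lambda>x. ennreal (f1 x))"
    proof
      fix x
      have e: "exp (- \<Phi>2 x) * exp (\<Phi>2 x - \<Phi>1 x) = exp (- \<Phi>1 x)" by (simp add: exp_add[symmetric])
      have "f2 x * g x = f1 x" unfolding f1_def f2_def g_def
        using Z1pos Z2pos e by (simp add: field_simps)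
      then show "ennreal (f2 x) * ennreal (g x) = ennreal (f1 x)"
        using f2pos[of x] gpos[of x] by (simp add: ennreal_mult[symmetric])
    qed
    finally show ?thesis by (simp add: \<nu>1_def)
  qed
  have ps2: "prob_space \<nu>2"
  proof (rule prob_spaceI)
    have "emeasure \<nu>2 (space \<nu>2) = (\<integral>\<^sup>+ x. ennreal (f2 x) \<partial>\<mu>)"
      by (simp add: \<nu>2_def emeasure_density nn_integral_set_ennreal[symmetric])
    also have "\<dots> = ennreal (\<integral>x. f2 x \<partial>\<mu>)"
      using Z2p(1) f2pos by (intro nn_integral_eq_integral) (auto simp: f2_def less_imp_le)
    also have "(\<integral>x. f2 x \<partial>\<mu>) = 1" using Z2pos by (simp add: f2_def Z2_def)
    finally show "emeasure \<nu>2 (space \<nu>2) = 1" by simp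
  qed
  have [measurable]: "g \<in> borel_measurable \<nu>2" by (simp add: \<nu>2_def)
  have "AE x in \<nu>2. ennreal (g x) = RN_deriv \<nu>2 \<nu>1 x"
    using sigma_finite_measure.RN_deriv_unique[OF prob_space_imp_sigma_finite[OF ps2] _ dens] by simp
  then have "AE x in \<mu>. ennreal (g x) = RN_deriv \<nu>2 \<nu>1 x"
    unfolding \<nu>2_def by (subst (asm) AE_density) (auto simp: f2pos)
  then have AE1: "AE x in \<nu>1. ennreal (g x) = RN_deriv \<nu>2 \<nu>1 x"
    unfolding \<nu>1_def by (subst AE_density) (auto elim!: eventually_mono)
  define F where "F x = enn2real (RN_deriv \<nu>2 \<nu>1 x)" for x
  have lnF: "AE x in \<nu>1. ln (F x) = \<Phi>2 x - \<Phi>1 x + (ln Z2 - ln Z1)"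
    using AE1
  proof (rule eventually_mono)
    fix x assume "ennreal (g x) = RN_deriv \<nu>2 \<nu>1 x"
    then have "F x = g x" using gpos[of x] by (simp add: F_def less_imp_le flip: \<open>ennreal (g x) = _\<close>)
    then show "ln (F x) = \<Phi>2 x - \<Phi>1 x + (ln Z2 - ln Z1)"
      using Z1pos Z2pos by (simp add: g_def ln_mult ln_div)
  qed
  have "(\<integral>\<^sup>+ x. ennreal (max 0 (ln (F x))) \<partial>\<nu>1) \<le> (\<integral>\<^sup>+ x. ennreal (\<bar>\<Phi>1 x - \<Phi>2 x\<bar> + L) \<partial>\<nu>1)"
    using lnF
  proof (intro nn_integral_mono_AE, elim eventually_mono)
    fix x assume "ln (F x) = \<Phi>2 x - \<Phi>1 x + (ln Z2 - ln Z1)"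
    then have "max 0 (ln (F x)) \<le> \<bar>\<Phi>1 x - \<Phi>2 x\<bar> + L" using L0 by (auto simp: L_def)
    then show "ennreal (max 0 (ln (F x))) \<le> ennreal (\<bar>\<Phi>1 x - \<Phi>2 x\<bar> + L)"
      by (rule ennreal_leI)
  qed
  also have "\<dots> = (\<integral>\<^sup>+ x. ennreal (f1 x) * ennreal (\<bar>\<Phi>1 x - \<Phi>2 x\<bar> + L) \<partial>\<mu>)"
    unfolding \<nu>1_def by (rule nn_integral_density) auto
  also have "\<dots> \<le> (\<integral>\<^sup>+ x. ennreal ((\<bar>\<Phi>1 x - \<Phi>2 x\<bar> + L) / Z1) \<partial>\<mu>)"
  proof (rule nn_integral_mono)
    fix x
    have "f1 x \<le> 1 / Z1" using Z1pos n1[of x] by (simp add: f1_def divide_right_mono)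
    then have "f1 x * (\<bar>\<Phi>1 x - \<Phi>2 x\<bar> + L) \<le> (1 / Z1) * (\<bar>\<Phi>1 x - \<Phi>2 x\<bar> + L)"
      using L0 by (intro mult_right_mono) auto
    then have le: "ennreal (f1 x * (\<bar>\<Phi>1 x - \<Phi>2 x\<bar> + L)) \<le> ennreal ((\<bar>\<Phi>1 x - \<Phi>2 x\<bar> + L) / Z1)"
      by (intro ennreal_leI) simp
    have eq: "ennreal (f1 x) * ennreal (\<bar>\<Phi>1 x - \<Phi>2 x\<bar> + L) = ennreal (f1 x * (\<bar>\<Phi>1 x - \<Phi>2 x\<bar> + L))"
      using f1pos[of x] L0 by (intro ennreal_mult[symmetric]) auto
    show "ennreal (f1 x) * ennreal (\<bar>\<Phi>1 x - \<Phi>2 x\<bar> + L) \<le> ennreal ((\<bar>\<Phi>1 x - \<Phi>2 x\<bar> + L) / Z1)"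
      using eq le by (rule ord_eq_le_trans)
  qed
  also have "\<dots> = ennreal (\<integral>x. (\<bar>\<Phi>1 x - \<Phi>2 x\<bar> + L) / Z1 \<partial>\<mu>)"
    using iD L0 Z1pos
    by (intro nn_integral_eq_integral Bochner_Integration.integrable_divide
        Bochner_Integration.integrable_add) auto
  also have "(\<integral>x. (\<bar>\<Phi>1 x - \<Phi>2 x\<bar> + L) / Z1 \<partial>\<mu>) = (D + L) / Z1"
    using iD by (simp add: D_def Bochner_Integration.integral_add prob_space.prob_space[OF P])
  finally have X: "(\<integral>\<^sup>+ x. ennreal (max 0 (ln (F x))) \<partial>\<nu>1) \<le> ennreal ((D + L) / Z1)" .
  have X': "(\<integral>\<^sup>+ x. ennreal (ln (F x)) \<partial>\<nu>1) \<le> ennreal ((D + L) / Z1)" using X by simp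
  have r0: "0 \<le> (D + L) / Z1" using D0 L0 Z1pos by simp
  have dkl: "d_KL (reweight \<mu> \<Phi>1) (reweight \<mu> \<Phi>2) \<le> ereal ((D + L) / Z1)"
    unfolding rw1 rw2 d_KL_def using sets_eq ac
    by (simp add: Let_def F_def[symmetric] ereal_sub_le[OF X' r0])
  have "(D + L) / Z1 = (D + L) * (1 / Z1)" by simp
  also have "\<dots> \<le> (D + D * exp s) * exp s"
    using LD Zs1 D0 L0 Z1pos by (intro mult_mono) auto
  also have "\<dots> = D * exp s + D * (exp s * exp s)" by (simp only: distrib_right mult.assoc)
  also have "\<dots> \<le> D * (exp s * exp s) + D * (exp s * exp s)"
  proof -
    have "1 \<le> exp s" using a10 by (simp add: s_def)
    then have "exp s * 1 \<le> exp s * exp s" by (intro mult_left_mono) simp_all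
    then have "exp s \<le> exp s * exp s" by simp
    then have "D * exp s \<le> D * (exp s * exp s)" by (rule mult_left_mono[OF _ D0])
    then show ?thesis by (rule add_right_mono)
  qed
  also have "\<dots> = 2 * exp (2 * s) * D"
  proof -
    have "exp (2 * s) = exp s * exp s" unfolding mult_2 by (rule exp_add)
    then show ?thesis by (simp only:) (simp add: algebra_simps)
  qed
  finally have "ereal ((D + L) / Z1) \<le> ereal (2 * exp (2 * s) * D)" by simp
  with dkl have "d_KL (reweight \<mu> \<Phi>1) (reweight \<mu> \<Phi>2) \<le> ereal (2 * exp (2 * s) * D)"
    by (rule order_trans)
  then show ?thesis unfolding s_def a1_def a2_def D_def .
qed



lemma mv_cont: "continuous_on S (\<lambda>a. (L::real^'n^'m) *v a)"
  by (rule linear_continuous_on) simp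

lemma wnorm_meas: "wnorm L \<in> borel_measurable borel"
proof -
  have "wnorm L = (\<lambda>a. sqrt (a \<bullet> (L *v a)))" by (rule ext) (simp add: wnorm_def)
  moreover have "continuous_on UNIV (\<lambda>a. sqrt (a \<bullet> (L *v a)))"
    by (intro continuous_intros mv_cont)
  ultimately show ?thesis by (simp add: borel_measurable_continuous_onI)
qed

lemma wsq_meas: "wsq_diff A B \<in> borel_measurable borel"
proof -
  have "wsq_diff A B = (\<lambda>a. a \<bullet> (A *v a) - a \<bullet> (B *v a))" by (rule ext) (simp add: wsq_diff_def)
  moreover have "continuous_on UNIV (\<lambda>a. a \<bullet> (A *v a) - a \<bullet> (B *v a))"
    by (intro continuous_intros mv_cont)
  ultimately show ?thesis by (simp add: borel_measurable_continuous_onI)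
qed

theorem mainTheorem6:
  fixes \<Theta> :: "'b::{banach, second_countable_topology} set"
    and \<mu> :: "'b measure"
    and Obs :: "'u::banach \<Rightarrow> real^'n"
    and M :: "'b \<Rightarrow> 'u"
    and \<Sigma> :: "real^'n^'n"
    and y :: "real^'n"
    and mE :: 'u
    and G :: "'u measure"
    and \<Phi>app \<Phi>enh :: "'b \<Rightarrow> real"
    and Cenh C :: real
  assumes "\<Theta> \<in> sets borel"
    and "prob_space \<mu>" and "sets \<mu> = sets (restrict_space borel \<Theta>)"
    and "bounded_linear Obs"
    and "M \<in> \<mu> \<rightarrow>\<^sub>M borel"
    and "pos_def_mat \<Sigma>"
    and "gaussian_measure G"
    and "\<Phi>app = (\<lambda>t. 1/2 * (wnorm (matrix_inv \<Sigma>) (y - Obs (M t)))\<^sup>2)"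
    and "\<Phi>enh = (\<lambda>t. 1/2 * (wnorm (matrix_inv (\<Sigma> + Gamma_mat Obs G)) (y - Obs (M t) - Obs mE))\<^sup>2)"
    and "Cenh = op_norm (psd_sqrt (matrix_inv \<Sigma>) ** psd_sqrt (\<Sigma> + Gamma_mat Obs G))"
    and "integrable \<mu> \<Phi>app" and "integrable \<mu> \<Phi>enh"
    and "C = exp (2 * (\<integral>t. \<bar>\<Phi>app t\<bar> \<partial>\<mu>) + 2 * (\<integral>t. \<bar>\<Phi>enh t\<bar> \<partial>\<mu>))
           * max (sqrt 2 * (sqrt (\<integral>t. \<bar>\<Phi>app t\<bar> \<partial>\<mu>) + Cenh * sqrt (\<integral>t. \<bar>\<Phi>enh t\<bar> \<partial>\<mu>))) 1"
  shows "max (d_KL (reweight \<mu> \<Phi>app) (reweight \<mu> \<Phi>enh))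
             (d_KL (reweight \<mu> \<Phi>enh) (reweight \<mu> \<Phi>app))
         \<le> ereal (C * (wnorm (matrix_inv \<Sigma>) (Obs mE)
              + (\<integral>t. \<bar>wsq_diff (matrix_inv \<Sigma>) (matrix_inv (\<Sigma> + Gamma_mat Obs G))
                         (y - Obs (M t) - Obs mE)\<bar> \<partial>\<mu>)))"
proof -
  note P = assms(2)
  interpret prob_space \<mu> by (rule P)
  define A where "A = matrix_inv \<Sigma>"
  define K where "K = \<Sigma> + Gamma_mat Obs G"
  define Bm where "Bm = matrix_inv K"
  define P where "P = psd_sqrt A"
  have pdS: "pos_def_mat \<Sigma>" by (rule assms(6))
  have pdK: "pos_def_mat K" unfolding K_def
    by (rule pd_add_psd[OF pdS gamma_psd[OF assms(7) assms(4)]])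
  have psdA: "psd_mat A" unfolding A_def by (rule pd_psd[OF pd_inv[OF pdS]])
  have psdB: "psd_mat Bm" unfolding Bm_def by (rule pd_psd[OF pd_inv[OF pdK]])
  have Ce: "Cenh = op_norm (psd_sqrt A ** psd_sqrt K)" using assms(10) by (simp add: A_def K_def)
  have Ce0: "0 \<le> Cenh" unfolding Ce op_norm_def by (rule onorm_pos_le) simp
  define r where "r t = y - Obs (M t)" for t
  define mm where "mm = Obs mE"
  define v where "v t = y - Obs (M t) - Obs mE" for t
  have vr: "v t = r t - mm" for t by (simp add: v_def r_def mm_def)
  have Om: "Obs \<in> borel_measurable borel"
    by (intro borel_measurable_continuous_onI linear_continuous_on assms(4))
  have OM[measurable]: "(\<lambda>t. Obs (M t)) \<in> borel_measurable \<mu>"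
    using measurable_compose[OF assms(5) Om] by (simp add: comp_def)
  have rm[measurable]: "r \<in> borel_measurable \<mu>" unfolding r_def by measurable
  have vm[measurable]: "v \<in> borel_measurable \<mu>" unfolding v_def by measurable
  have wnA[measurable]: "wnorm A \<in> borel_measurable borel" by (rule wnorm_meas)
  have wnB[measurable]: "wnorm Bm \<in> borel_measurable borel" by (rule wnorm_meas)
  have wsm[measurable]: "wsq_diff A Bm \<in> borel_measurable borel" by (rule wsq_meas)
  define p where "p t = wnorm A (r t)" for t
  define b where "b t = wnorm Bm (v t)" for t
  define w where "w t = wsq_diff A Bm (v t)" for t
  have pm[measurable]: "p \<in> borel_measurable \<mu>" unfolding p_def
    using measurable_compose[OF rm wnA] by (simp add: comp_def)
  have bm[measurable]: "b \<in> borel_measurable \<mu>" unfolding b_def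
    using measurable_compose[OF vm wnB] by (simp add: comp_def)
  have wm[measurable]: "w \<in> borel_measurable \<mu>" unfolding w_def
    using measurable_compose[OF vm wsm] by (simp add: comp_def)
  have app: "\<Phi>app = (\<lambda>t. (p t)\<^sup>2 / 2)" using assms(8) by (simp add: p_def r_def A_def)
  have enh: "\<Phi>enh = (\<lambda>t. (b t)\<^sup>2 / 2)" using assms(9) by (simp add: b_def v_def Bm_def K_def)
  have p0: "0 \<le> p t" for t using psdA by (simp add: p_def wnorm_nonneg)
  have b0: "0 \<le> b t" for t using psdB by (simp add: b_def wnorm_nonneg)
  have appm[measurable]: "\<Phi>app \<in> borel_measurable \<mu>" unfolding app by measurable
  have enhm[measurable]: "\<Phi>enh \<in> borel_measurable \<mu>" unfolding enh by measurable
  have appn: "0 \<le> \<Phi>app t" for t by (simp add: app)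
  have enhn: "0 \<le> \<Phi>enh t" for t by (simp add: enh)
  define a1 where "a1 = (\<integral>t. \<Phi>app t \<partial>\<mu>)"
  define a2 where "a2 = (\<integral>t. \<Phi>enh t \<partial>\<mu>)"
  have a1abs: "(\<integral>t. \<bar>\<Phi>app t\<bar> \<partial>\<mu>) = a1" using appn by (simp add: a1_def)
  have a2abs: "(\<integral>t. \<bar>\<Phi>enh t\<bar> \<partial>\<mu>) = a2" using enhn by (simp add: a2_def)
  define D where "D = (\<integral>t. \<bar>\<Phi>app t - \<Phi>enh t\<bar> \<partial>\<mu>)"
  define W where "W = (\<integral>t. \<bar>w t\<bar> \<partial>\<mu>)"
  define wmE where "wmE = wnorm A mm"
  define Mx where "Mx = max (sqrt 2 * (sqrt a1 + Cenh * sqrt a2)) 1"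
  have CC: "C = exp (2 * a1 + 2 * a2) * Mx" using assms(13) by (simp add: a1abs a2abs Mx_def)
  have KL1: "d_KL (reweight \<mu> \<Phi>app) (reweight \<mu> \<Phi>enh) \<le> ereal (2 * exp (2 * (a1 + a2)) * D)"
    using KL_bound[OF P appm enhm appn enhn assms(11) assms(12)] by (simp add: a1_def a2_def D_def)
  have KL2: "d_KL (reweight \<mu> \<Phi>enh) (reweight \<mu> \<Phi>app) \<le> ereal (2 * exp (2 * (a1 + a2)) * D)"
    using KL_bound[OF P enhm appm enhn appn assms(12) assms(11)]
    by (simp add: a1_def a2_def D_def abs_minus_commute add.commute)
  have pt: "\<bar>\<Phi>app t - \<Phi>enh t\<bar> \<le> wmE * (p t + Cenh * b t) / 2 + \<bar>w t\<bar> / 2" for t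
  proof -
    define q where "q = wnorm A (v t)"
    have pn: "p t = norm (P *v r t)" "q = norm (P *v v t)" "wmE = norm (P *v mm)"
      using wnorm_eq(1)[OF psdA] by (simp_all add: p_def q_def wmE_def P_def)
    have "\<bar>p t - q\<bar> \<le> norm (P *v r t - P *v v t)" unfolding pn by (rule norm_triangle_ineq3)
    also have "P *v r t - P *v v t = P *v mm" by (simp add: vr matrix_vector_mult_diff_distrib)
    finally have pq: "\<bar>p t - q\<bar> \<le> wmE" by (simp add: pn)
    have qb: "q \<le> Cenh * b t"
      using Cenh_bound[OF pdK psdA, of "v t"] pn(2) by (simp add: Ce b_def Bm_def P_def)
    have q0: "0 \<le> q" using pn by simp
    have wmE0: "0 \<le> wmE" using pn by simp
    have "\<bar>q\<^sup>2 - (b t)\<^sup>2\<bar> = \<bar>w t\<bar>"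
      using wnorm_eq(2)[OF psdA, of "v t"] wnorm_eq(2)[OF psdB, of "v t"]
      by (simp add: q_def b_def w_def wsq_diff_def)
    then show ?thesis
      using real_pt_bound[OF p0 q0 wmE0 b0 pq qb] by (simp add: app enh)
  qed
  have app2: "(\<lambda>t. 2 * \<Phi>app t) \<in> borel_measurable \<mu>" "integrable \<mu> (\<lambda>t. 2 * \<Phi>app t)"
    using assms(11) by auto
  have enh2: "(\<lambda>t. 2 * \<Phi>enh t) \<in> borel_measurable \<mu>" "integrable \<mu> (\<lambda>t. 2 * \<Phi>enh t)"
    using assms(12) by auto
  have psq: "p t = sqrt (2 * \<Phi>app t)" for t using p0[of t] by (simp add: app)
  have bsq: "b t = sqrt (2 * \<Phi>enh t)" for t using b0[of t] by (simp add: enh)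
  note sp = sqrt_int[OF P app2(1) _ app2(2)]
  note sb = sqrt_int[OF P enh2(1) _ enh2(2)]
  have ip: "integrable \<mu> p" using sp(1) appn by (simp add: psq[abs_def])
  have ib: "integrable \<mu> b" using sb(1) enhn by (simp add: bsq[abs_def])
  have Ip: "(\<integral>t. p t \<partial>\<mu>) \<le> sqrt 2 * sqrt a1"
    using sp(2) appn by (simp add: psq[abs_def] a1_def real_sqrt_mult)
  have Ib: "(\<integral>t. b t \<partial>\<mu>) \<le> sqrt 2 * sqrt a2"
    using sb(2) enhn by (simp add: bsq[abs_def] a2_def real_sqrt_mult)
  have iw: "integrable \<mu> (\<lambda>t. \<bar>w t\<bar>)"
  proof (rule Bochner_Integration.integrable_bound[of _ "\<lambda>t. (Cenh\<^sup>2 + 1) * (2 * \<Phi>enh t)"])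
    show "integrable \<mu> (\<lambda>t. (Cenh\<^sup>2 + 1) * (2 * \<Phi>enh t))" using enh2(2) by simp
    show "(\<lambda>t. \<bar>w t\<bar>) \<in> borel_measurable \<mu>" by measurable
    show "AE t in \<mu>. norm \<bar>w t\<bar> \<le> norm ((Cenh\<^sup>2 + 1) * (2 * \<Phi>enh t))"
    proof (rule AE_I2)
      fix t
      define q where "q = wnorm A (v t)"
      have qq: "q = norm (P *v v t)" using wnorm_eq(1)[OF psdA] by (simp add: q_def P_def)
      have qb: "q \<le> Cenh * b t"
        using Cenh_bound[OF pdK psdA, of "v t"] qq by (simp add: Ce b_def Bm_def P_def)
      have q0: "0 \<le> q" using qq by simp
      have "q\<^sup>2 \<le> (Cenh * b t)\<^sup>2" using qb q0 by (intro power_mono) auto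
      moreover have "\<bar>w t\<bar> \<le> q\<^sup>2 + (b t)\<^sup>2"
        using wnorm_eq(2)[OF psdA, of "v t"] wnorm_eq(2)[OF psdB, of "v t"]
          psd_nonneg[OF psdA, of "v t"] psd_nonneg[OF psdB, of "v t"]
        by (simp add: q_def b_def w_def wsq_diff_def)
      ultimately have "\<bar>w t\<bar> \<le> (Cenh\<^sup>2 + 1) * (b t)\<^sup>2" by (simp add: power_mult_distrib algebra_simps)
      moreover have "0 \<le> (Cenh\<^sup>2 + 1) * (2 * \<Phi>enh t)" using enhn[of t] by simp
      ultimately show "norm \<bar>w t\<bar> \<le> norm ((Cenh\<^sup>2 + 1) * (2 * \<Phi>enh t))"
        by (simp add: enh)
    qed
  qed
  have iD: "integrable \<mu> (\<lambda>t. \<bar>\<Phi>app t - \<Phi>enh t\<bar>)"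
    using assms(11,12) by (intro integrable_abs Bochner_Integration.integrable_diff)
  have "D \<le> (\<integral>t. wmE * (p t + Cenh * b t) / 2 + \<bar>w t\<bar> / 2 \<partial>\<mu>)"
    unfolding D_def using iD ip ib iw pt
    by (intro integral_mono Bochner_Integration.integrable_add Bochner_Integration.integrable_divide
         integrable_mult_right) auto
  also have "\<dots> = wmE * ((\<integral>t. p t \<partial>\<mu>) + Cenh * (\<integral>t. b t \<partial>\<mu>)) / 2 + W / 2"
    using ip ib iw by (simp add: W_def Bochner_Integration.integral_add)
  finally have D2: "2 * D \<le> wmE * ((\<integral>t. p t \<partial>\<mu>) + Cenh * (\<integral>t. b t \<partial>\<mu>)) + W" by simp
  have wmE0: "0 \<le> wmE" using psdA by (simp add: wmE_def wnorm_nonneg)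
  have W0: "0 \<le> W" by (simp add: W_def)
  have "wmE * ((\<integral>t. p t \<partial>\<mu>) + Cenh * (\<integral>t. b t \<partial>\<mu>)) \<le> wmE * (sqrt 2 * sqrt a1 + Cenh * (sqrt 2 * sqrt a2))"
    using Ip Ib Ce0 wmE0 by (intro mult_left_mono add_mono) auto
  also have "\<dots> = wmE * (sqrt 2 * (sqrt a1 + Cenh * sqrt a2))" by (simp add: algebra_simps)
  also have "\<dots> \<le> wmE * Mx" using wmE0 by (intro mult_left_mono) (auto simp: Mx_def)
  finally have E: "wmE * ((\<integral>t. p t \<partial>\<mu>) + Cenh * (\<integral>t. b t \<partial>\<mu>)) \<le> wmE * Mx" .
  have "2 * D \<le> wmE * Mx + W * Mx"
  proof -
    have "1 \<le> Mx" by (simp add: Mx_def)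
    then have "W * 1 \<le> W * Mx" using W0 by (rule mult_left_mono)
    then show ?thesis using D2 E by linarith
  qed
  then have "2 * D \<le> Mx * (wmE + W)" by (simp add: algebra_simps)
  then have h: "exp (2 * a1 + 2 * a2) * (2 * D) \<le> exp (2 * a1 + 2 * a2) * (Mx * (wmE + W))"
    by (intro mult_left_mono) simp_all
  have e1: "2 * exp (2 * (a1 + a2)) * D = exp (2 * a1 + 2 * a2) * (2 * D)"
    by (simp add: algebra_simps)
  have e2: "exp (2 * a1 + 2 * a2) * (Mx * (wmE + W)) = C * (wmE + W)" by (simp add: CC)
  have fin: "2 * exp (2 * (a1 + a2)) * D \<le> C * (wmE + W)" using h unfolding e1 e2 .
  have "max (d_KL (reweight \<mu> \<Phi>app) (reweight \<mu> \<Phi>enh)) (d_KL (reweight \<mu> \<Phi>enh) (reweight \<mu> \<Phi>app))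
      \<le> ereal (C * (wmE + W))"
    using KL1 KL2 fin by (auto intro: order_trans)
  then show ?thesis by (simp add: wmE_def A_def mm_def W_def w_def Bm_def K_def v_def)
qed

end
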